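(* Let $\mathcal G=(I,O,\lambda)$ be a synchronous game and let $p(a,b|v,w)=\langle h_{v,a},k_{w,b}\rangle$ be a perfect vect-strategy for $\mathcal G$, with vectors $h_{v,a},k_{w,b}$ as in the definition of a vector correlation. Then $h_{v,a}=k_{v,a}$ for all $v\in I$, $a\in O$.
   Context: A synchronous game $\mathcal G=(I,O,\lambda)$ consists of finite sets $I,O$ and $\lambda:I\times I\times O\times O\to\{0,1\}$ with $\lambda(v,v,a,b)=1$ if $a=b$ and $0$ if $a\ne b$. A strategy $p(a,b|v,w)$ is perfect if $\lambda(v,w,a,b)=0\Rightarrow p(a,b|v,w)=0$. A vector correlation (vect-strategy) is one of the form $p(a,b|v,w)=\langle h_{v,a},k_{w,b}\rangle$ where $h_{v,a},k_{w,b}$ ($v,w\in I$, $a,b\in O$) are vectors in a Hilbert space such that for each $v$ the vectors $\{h_{v,a}\}_{a\in O}$ are mutually orthogonal and the vectors $\{k_{v,b}\}_{b\in O}$ are mutually orthogonal, there is a unit vector $\eta$ with $\sum_ah_{v,a}=\eta=\sum_bk_{w,b}$ for all $v,w$, and $\langle h_{v,a},k_{w,b}\rangle\ge0$ for all $v,w,a,b$. *)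

theory Defs
  imports Complex_Main
begin

definition synchronous_game ::
  "'i set \<Rightarrow> 'o set \<Rightarrow> ('i \<Rightarrow> 'i \<Rightarrow> 'o \<Rightarrow> 'o \<Rightarrow> nat) \<Rightarrow> bool" where
  "synchronous_game I Out lam \<longleftrightarrow>
     finite I \<and> finite Out \<and>
     (\<forall>v\<in>I. \<forall>w\<in>I. \<forall>a\<in>Out. \<forall>b\<in>Out. lam v w a b \<in> {0, 1}) \<and>
     (\<forall>v\<in>I. \<forall>a\<in>Out. \<forall>b\<in>Out. lam v v a b = (if a = b then 1 else 0))"

definition perfect_strategy ::
  "'i set \<Rightarrow> 'o set \<Rightarrow> ('i \<Rightarrow> 'i \<Rightarrow> 'o \<Rightarrow> 'o \<Rightarrow> nat)
     \<Rightarrow> ('o \<Rightarrow> 'o \<Rightarrow> 'i \<Rightarrow> 'i \<Rightarrow> complex) \<Rightarrow> bool" where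
  "perfect_strategy I Out lam p \<longleftrightarrow>
     (\<forall>v\<in>I. \<forall>w\<in>I. \<forall>a\<in>Out. \<forall>b\<in>Out. lam v w a b = 0 \<longrightarrow> p a b v w = 0)"

definition ip_norm :: "('h \<Rightarrow> 'h \<Rightarrow> complex) \<Rightarrow> 'h \<Rightarrow> real" where
  "ip_norm ip x = sqrt (Re (ip x x))"

definition complex_hilbert_space ::
  "(complex \<Rightarrow> 'h::ab_group_add \<Rightarrow> 'h) \<Rightarrow> ('h \<Rightarrow> 'h \<Rightarrow> complex) \<Rightarrow> bool" where
  "complex_hilbert_space sm ip \<longleftrightarrow>
     (\<forall>x. sm 1 x = x) \<and>
     (\<forall>a b x. sm (a * b) x = sm a (sm b x)) \<and>
     (\<forall>a x y. sm a (x + y) = sm a x + sm a y) \<and>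
     (\<forall>a b x. sm (a + b) x = sm a x + sm b x) \<and>
     (\<forall>x y z. ip (x + y) z = ip x z + ip y z) \<and>
     (\<forall>c x y. ip (sm c x) y = c * ip x y) \<and>
     (\<forall>x y. ip y x = cnj (ip x y)) \<and>
     (\<forall>x. Im (ip x x) = 0 \<and> Re (ip x x) \<ge> 0) \<and>
     (\<forall>x. ip x x = 0 \<longrightarrow> x = 0) \<and>
     (\<forall>X :: nat \<Rightarrow> 'h.
        (\<forall>e>0. \<exists>N. \<forall>m\<ge>N. \<forall>n\<ge>N. ip_norm ip (X m - X n) < e) \<longrightarrow>
        (\<exists>L. \<forall>e>0. \<exists>N. \<forall>n\<ge>N. ip_norm ip (X n - L) < e))"

definition vect_correlation ::
  "('h::ab_group_add \<Rightarrow> 'h \<Rightarrow> complex) \<Rightarrow> 'i set \<Rightarrow> 'o set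
     \<Rightarrow> ('i \<Rightarrow> 'o \<Rightarrow> 'h) \<Rightarrow> ('i \<Rightarrow> 'o \<Rightarrow> 'h) \<Rightarrow> bool" where
  "vect_correlation ip I Out h k \<longleftrightarrow>
     (\<forall>v\<in>I. \<forall>a\<in>Out. \<forall>a'\<in>Out. a \<noteq> a' \<longrightarrow> ip (h v a) (h v a') = 0) \<and>
     (\<forall>v\<in>I. \<forall>b\<in>Out. \<forall>b'\<in>Out. b \<noteq> b' \<longrightarrow> ip (k v b) (k v b') = 0) \<and>
     (\<exists>eta. ip eta eta = 1 \<and>
        (\<forall>v\<in>I. (\<Sum>a\<in>Out. h v a) = eta) \<and> (\<forall>w\<in>I. (\<Sum>b\<in>Out. k w b) = eta)) \<and>
     (\<forall>v\<in>I. \<forall>w\<in>I. \<forall>a\<in>Out. \<forall>b\<in>Out.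
        Im (ip (h v a) (k w b)) = 0 \<and> Re (ip (h v a) (k w b)) \<ge> 0)"

end

theory Submission
  imports Defs
begin

lemma ip_zero_l:
  fixes ip :: "'h::ab_group_add \<Rightarrow> 'h \<Rightarrow> complex"
  assumes add: "\<And>x y z. ip (x + y) z = ip x z + ip y z"
  shows "ip 0 z = 0"
proof -
  have "ip (0 + 0) z = ip 0 z + ip 0 z" by (rule add)
  hence "ip 0 z + 0 = ip 0 z + ip 0 z" by simp
  thus ?thesis by (metis add_left_cancel)
qed

lemma ip_diff_l:
  fixes ip :: "'h::ab_group_add \<Rightarrow> 'h \<Rightarrow> complex"
  assumes add: "\<And>x y z. ip (x + y) z = ip x z + ip y z"
  shows "ip (x - y) z = ip x z - ip y z"
proof -
  have "ip ((x - y) + y) z = ip (x - y) z + ip y z" by (rule add)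
  hence "ip x z = ip (x - y) z + ip y z" by simp
  thus ?thesis by (simp add: algebra_simps)
qed

lemma ip_sum_l:
  fixes ip :: "'h::ab_group_add \<Rightarrow> 'h \<Rightarrow> complex"
  assumes add: "\<And>x y z. ip (x + y) z = ip x z + ip y z"
  shows "ip (sum f A) z = (\<Sum>a\<in>A. ip (f a) z)"
proof (induction A rule: infinite_finite_induct)
  case (infinite A) thus ?case using ip_zero_l[of ip, OF add] by simp
next
  case empty thus ?case using ip_zero_l[of ip, OF add] by simp
next
  case (insert x F) thus ?case by (simp add: add)
qed

theorem mainTheorem9:
  fixes I :: "'i set" and Out :: "'o set" and lam :: "'i \<Rightarrow> 'i \<Rightarrow> 'o \<Rightarrow> 'o \<Rightarrow> nat"
    and sm :: "complex \<Rightarrow> 'h::ab_group_add \<Rightarrow> 'h" and ip :: "'h \<Rightarrow> 'h \<Rightarrow> complex"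
    and h k :: "'i \<Rightarrow> 'o \<Rightarrow> 'h"
  assumes "synchronous_game I Out lam"
    and "complex_hilbert_space sm ip"
    and "vect_correlation ip I Out h k"
    and "perfect_strategy I Out lam (\<lambda>a b v w. ip (h v a) (k w b))"
  shows "\<forall>v\<in>I. \<forall>a\<in>Out. h v a = k v a"
proof (intro ballI)
  fix v a assume v: "v \<in> I" and a: "a \<in> Out"
  have add: "\<And>x y z. ip (x + y) z = ip x z + ip y z"
    and cj: "\<And>x y. ip y x = cnj (ip x y)"
    and def: "\<And>x. ip x x = 0 \<Longrightarrow> x = 0"
    using assms(2) unfolding complex_hilbert_space_def by blast+
  have addr: "\<And>x y z. ip z (x + y) = ip z x + ip z y"
  proof -
    fix x y z
    have "ip z (x + y) = cnj (ip (x + y) z)" by (rule cj)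
    also have "\<dots> = cnj (ip x z) + cnj (ip y z)" by (simp add: add)
    also have "\<dots> = ip z x + ip z y" using cj[of z x] cj[of z y] by simp
    finally show "ip z (x + y) = ip z x + ip z y" .
  qed
  have diffr: "\<And>x y z. ip z (x - y) = ip z x - ip z y"
  proof -
    fix x y z
    have "ip z (x - y) = cnj (ip (x - y) z)" by (rule cj)
    also have "\<dots> = cnj (ip x z) - cnj (ip y z)" by (simp add: ip_diff_l[of ip, OF add])
    also have "\<dots> = ip z x - ip z y" using cj[of z x] cj[of z y] by simp
    finally show "ip z (x - y) = ip z x - ip z y" .
  qed
  have sumr: "\<And>f A z. ip z (sum f A) = (\<Sum>a\<in>A. ip z (f a))"
  proof -
    fix f A z
    have "ip z (sum f A) = cnj (ip (sum f A) z)" by (rule cj)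
    also have "\<dots> = (\<Sum>a\<in>A. cnj (ip (f a) z))" by (simp add: ip_sum_l[of ip, OF add])
    also have "\<dots> = (\<Sum>a\<in>A. ip z (f a))" by (intro sum.cong refl) (rule cj[symmetric])
    finally show "ip z (sum f A) = (\<Sum>a\<in>A. ip z (f a))" .
  qed
  have fin: "finite Out" using assms(1) unfolding synchronous_game_def by auto
  have lam0: "\<And>b. b \<in> Out \<Longrightarrow> b \<noteq> a \<Longrightarrow> lam v v a b = 0"
    and lam0': "\<And>b. b \<in> Out \<Longrightarrow> b \<noteq> a \<Longrightarrow> lam v v b a = 0"
    using assms(1) v a unfolding synchronous_game_def by auto
  have off: "\<And>b. b \<in> Out \<Longrightarrow> b \<noteq> a \<Longrightarrow> ip (h v a) (k v b) = 0"
    using assms(4) lam0 v a unfolding perfect_strategy_def by auto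
  have off': "\<And>b. b \<in> Out \<Longrightarrow> b \<noteq> a \<Longrightarrow> ip (h v b) (k v a) = 0"
    using assms(4) lam0' v a unfolding perfect_strategy_def by auto
  have horth: "\<And>b. b \<in> Out \<Longrightarrow> b \<noteq> a \<Longrightarrow> ip (h v a) (h v b) = 0"
    and korth: "\<And>b. b \<in> Out \<Longrightarrow> b \<noteq> a \<Longrightarrow> ip (k v a) (k v b) = 0"
    using assms(3) v a unfolding vect_correlation_def by auto
  obtain eta where hs: "(\<Sum>b\<in>Out. h v b) = eta" and ks: "(\<Sum>b\<in>Out. k v b) = eta"
    using assms(3) v unfolding vect_correlation_def by blast
  have real: "Im (ip (h v a) (k v a)) = 0"
    using assms(3) v a unfolding vect_correlation_def by auto
  have e1: "ip (h v a) eta = ip (h v a) (k v a)"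
    unfolding ks[symmetric] sumr using fin a off by (simp add: sum.remove)
  have e2: "ip (h v a) eta = ip (h v a) (h v a)"
    unfolding hs[symmetric] sumr using fin a horth by (simp add: sum.remove)
  have e3: "ip (k v a) eta = ip (k v a) (k v a)"
    unfolding ks[symmetric] sumr using fin a korth by (simp add: sum.remove)
  have e4: "ip eta (k v a) = ip (h v a) (k v a)"
    unfolding hs[symmetric] ip_sum_l[of ip, OF add] using fin a off' by (simp add: sum.remove)
  let ?c = "ip (h v a) (k v a)"
  have cr: "cnj ?c = ?c" using real by (simp add: complex_eq_iff)
  have hh: "ip (h v a) (h v a) = ?c" using e1 e2 by simp
  have kh: "ip (k v a) (h v a) = ?c" using cj[of "h v a" "k v a"] cr by simp
  have "ip (k v a) eta = cnj (ip eta (k v a))" by (rule cj)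
  hence kk: "ip (k v a) (k v a) = ?c" using e3 e4 cr by simp
  have "ip (h v a - k v a) (h v a - k v a) = 0"
    by (simp add: ip_diff_l[of ip, OF add] diffr hh kh kk)
  hence "h v a - k v a = 0" by (rule def)
  thus "h v a = k v a" by simp
qed

end
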